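(* Let $G$ be a word-hyperbolic group with marked finite generating set $A$, let $X=\Gamma(G,A)$ with word metric $d_X$ and $|g|_X=d_X(1,g)$, let $H\le G$ be quasiconvex, and let $Y=\Gamma(G/H,A)$ with simplicial metric $d_Y$. Then there is an integer constant $K_1>0$ (depending only on $G,A,H$) with the following property. Let $g,f\in G$ be elements of minimal $|\cdot|_X$-length in the cosets $Hg$ and $Hf$ respectively. Let $w$ be the label (a word over $A^{\pm1}$) of a near geodesic path in $Y$ from $Hg$ to $Hf$, and let $h\in H$ be such that $hf=g\bar w$, where $\bar w\in G$ is the element represented by $w$. Then $|h|_X\le K_1$.
   Context: A marked finite generating set of $G$ is a map $\pi:A\to G$ from a finite alphabet such that $\pi(A)$ generates $G$. $\Gamma(G/H,A)$ is the graph with vertices the right cosets $Hg$ and, for each $(Hg,a)\in G/H\times A$, an edge from $Hg$ to $Hg\pi(a)$ labeled $a$; $\Gamma(G,A)$ is the case $H=1$. All edges have length one. A path $p$ in a geodesic metric space is near geodesic if $p=p_1p'p_2$ where $p_1,p',p_2$ are geodesic segments and $0\le l(p_i)\le 1$ for $i=1,2$. $H$ quasiconvex means there is $E>0$ such that every geodesic in $X$ with endpoints in $H$ lies in the $E$-neighborhood of $H$. *)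

theory Defs
  imports Complex_Main "HOL-Algebra.Algebra"
begin

text \<open>Words over the alphabet A^{+-1}: a letter is a pair (a, s) with a in A;
  s = True means a, s = False means a^{-1}.\<close>

definition words :: "'a set \<Rightarrow> ('a \<times> bool) list set" where
  "words A = {w. \<forall>x\<in>set w. fst x \<in> A}"

definition letter_val :: "('g, 'b) monoid_scheme \<Rightarrow> ('a \<Rightarrow> 'g) \<Rightarrow> 'a \<times> bool \<Rightarrow> 'g" where
  "letter_val G \<pi> x = (if snd x then \<pi> (fst x) else inv\<^bsub>G\<^esub> (\<pi> (fst x)))"

definition word_eval :: "('g, 'b) monoid_scheme \<Rightarrow> ('a \<Rightarrow> 'g) \<Rightarrow> ('a \<times> bool) list \<Rightarrow> 'g" where
  "word_eval G \<pi> w = foldr (\<lambda>x acc. letter_val G \<pi> x \<otimes>\<^bsub>G\<^esub> acc) w \<one>\<^bsub>G\<^esub>"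

definition marked_gen_set :: "('g, 'b) monoid_scheme \<Rightarrow> 'a set \<Rightarrow> ('a \<Rightarrow> 'g) \<Rightarrow> bool" where
  "marked_gen_set G A \<pi> \<longleftrightarrow> finite A \<and> \<pi> ` A \<subseteq> carrier G \<and> generate G (\<pi> ` A) = carrier G"

definition wlen :: "('g, 'b) monoid_scheme \<Rightarrow> 'a set \<Rightarrow> ('a \<Rightarrow> 'g) \<Rightarrow> 'g \<Rightarrow> nat" where
  "wlen G A \<pi> g = (LEAST n. \<exists>w\<in>words A. length w = n \<and> word_eval G \<pi> w = g)"

definition dX :: "('g, 'b) monoid_scheme \<Rightarrow> 'a set \<Rightarrow> ('a \<Rightarrow> 'g) \<Rightarrow> 'g \<Rightarrow> 'g \<Rightarrow> nat" where
  "dX G A \<pi> x y = wlen G A \<pi> (inv\<^bsub>G\<^esub> x \<otimes>\<^bsub>G\<^esub> y)"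

definition gromov_prod :: "('g, 'b) monoid_scheme \<Rightarrow> 'a set \<Rightarrow> ('a \<Rightarrow> 'g) \<Rightarrow> 'g \<Rightarrow> 'g \<Rightarrow> 'g \<Rightarrow> real" where
  "gromov_prod G A \<pi> t x y =
     (real (dX G A \<pi> x t) + real (dX G A \<pi> y t) - real (dX G A \<pi> x y)) / 2"

definition word_hyperbolic :: "('g, 'b) monoid_scheme \<Rightarrow> 'a set \<Rightarrow> ('a \<Rightarrow> 'g) \<Rightarrow> bool" where
  "word_hyperbolic G A \<pi> \<longleftrightarrow> (\<exists>\<delta>::real. \<delta> \<ge> 0 \<and>
     (\<forall>t\<in>carrier G. \<forall>x\<in>carrier G. \<forall>y\<in>carrier G. \<forall>z\<in>carrier G.
        gromov_prod G A \<pi> t x z \<ge> min (gromov_prod G A \<pi> t x y) (gromov_prod G A \<pi> t y z) - \<delta>))"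

definition quasiconvex :: "('g, 'b) monoid_scheme \<Rightarrow> 'a set \<Rightarrow> ('a \<Rightarrow> 'g) \<Rightarrow> 'g set \<Rightarrow> bool" where
  "quasiconvex G A \<pi> H \<longleftrightarrow> (\<exists>E::real. E > 0 \<and>
     (\<forall>h1\<in>H. \<forall>w\<in>words A.
        h1 \<otimes>\<^bsub>G\<^esub> word_eval G \<pi> w \<in> H \<and>
        length w = dX G A \<pi> h1 (h1 \<otimes>\<^bsub>G\<^esub> word_eval G \<pi> w) \<longrightarrow>
        (\<forall>k\<le>length w. \<exists>h\<in>H. real (dX G A \<pi> (h1 \<otimes>\<^bsub>G\<^esub> word_eval G \<pi> (take k w)) h) \<le> E)))"

text \<open>Simplicial metric of the coset graph Y = Gamma(G/H, A) on right cosets Hg.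
  The path labelled w starting at the coset C ends at C #> w-bar.\<close>
definition dY :: "('g, 'b) monoid_scheme \<Rightarrow> 'a set \<Rightarrow> ('a \<Rightarrow> 'g) \<Rightarrow> 'g set \<Rightarrow> 'g set \<Rightarrow> nat" where
  "dY G A \<pi> C D = (LEAST n. \<exists>w\<in>words A. length w = n \<and> C #>\<^bsub>G\<^esub> word_eval G \<pi> w = D)"

definition geodesic_Y :: "('g, 'b) monoid_scheme \<Rightarrow> 'a set \<Rightarrow> ('a \<Rightarrow> 'g) \<Rightarrow> 'g set \<Rightarrow> ('a \<times> bool) list \<Rightarrow> bool" where
  "geodesic_Y G A \<pi> C w \<longleftrightarrow> w \<in> words A \<and> length w = dY G A \<pi> C (C #>\<^bsub>G\<^esub> word_eval G \<pi> w)"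

definition near_geodesic_Y :: "('g, 'b) monoid_scheme \<Rightarrow> 'a set \<Rightarrow> ('a \<Rightarrow> 'g) \<Rightarrow> 'g set \<Rightarrow> ('a \<times> bool) list \<Rightarrow> bool" where
  "near_geodesic_Y G A \<pi> C w \<longleftrightarrow> (\<exists>u1 v u2. w = u1 @ v @ u2 \<and> length u1 \<le> 1 \<and> length u2 \<le> 1 \<and>
     geodesic_Y G A \<pi> C u1 \<and>
     geodesic_Y G A \<pi> (C #>\<^bsub>G\<^esub> word_eval G \<pi> u1) v \<and>
     geodesic_Y G A \<pi> (C #>\<^bsub>G\<^esub> word_eval G \<pi> (u1 @ v)) u2)"

end

theory Submission
  imports Defs
begin

locale wsetup = group G for G (structure) +
  fixes A :: "'c set" and \<pi> :: "'c \<Rightarrow> 'a"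
  assumes mg: "marked_gen_set G A \<pi>"
begin

abbreviation "ev \<equiv> word_eval G \<pi>"
abbreviation "wl \<equiv> wlen G A \<pi>"

lemma piA: "a \<in> A \<Longrightarrow> \<pi> a \<in> carrier G"
  using mg unfolding marked_gen_set_def by auto

lemma lv_closed: "fst x \<in> A \<Longrightarrow> letter_val G \<pi> x \<in> carrier G"
  using piA by (auto simp: letter_val_def)

lemma words_Cons[simp]: "(x # w \<in> words A) = (fst x \<in> A \<and> w \<in> words A)"
  by (auto simp: words_def)
lemma words_append[simp]: "(u @ v \<in> words A) = (u \<in> words A \<and> v \<in> words A)"
  by (auto simp: words_def)
lemma words_Nil[simp]: "[] \<in> words A" by (auto simp: words_def)

lemma ev_Nil[simp]: "ev [] = \<one>" by (simp add: word_eval_def)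
lemma ev_Cons[simp]: "ev (x # w) = letter_val G \<pi> x \<otimes> ev w" by (simp add: word_eval_def)

lemma ev_closed: "w \<in> words A \<Longrightarrow> ev w \<in> carrier G"
  by (induction w) (auto simp: lv_closed)

lemma ev_append: "u \<in> words A \<Longrightarrow> v \<in> words A \<Longrightarrow> ev (u @ v) = ev u \<otimes> ev v"
  by (induction u) (auto simp: ev_closed lv_closed m_assoc)

definition iw :: "('c \<times> bool) list \<Rightarrow> ('c \<times> bool) list" where
  "iw w = rev (map (\<lambda>x. (fst x, \<not> snd x)) w)"

lemma iw_words: "w \<in> words A \<Longrightarrow> iw w \<in> words A"
  by (auto simp: iw_def words_def)
lemma iw_len[simp]: "length (iw w) = length w" by (simp add: iw_def)

lemma ev_iw: "w \<in> words A \<Longrightarrow> ev (iw w) = inv (ev w)"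
proof (induction w)
  case Nil then show ?case by (simp add: iw_def)
next
  case (Cons x w)
  have iw: "iw (x # w) = iw w @ [(fst x, \<not> snd x)]" by (simp add: iw_def)
  have "ev (iw (x # w)) = ev (iw w) \<otimes> ev [(fst x, \<not> snd x)]"
    unfolding iw using Cons by (intro ev_append) (auto simp: iw_words)
  also have "ev [(fst x, \<not> snd x)] = inv (letter_val G \<pi> x)"
    using Cons piA by (auto simp: letter_val_def)
  finally show ?case using Cons by (simp add: ev_closed lv_closed inv_mult_group)
qed

lemma all_words: "x \<in> carrier G \<Longrightarrow> \<exists>w\<in>words A. ev w = x"
proof -
  assume "x \<in> carrier G"
  then have "x \<in> generate G (\<pi> ` A)" using mg by (simp add: marked_gen_set_def)
  then show ?thesis
  proof (induction rule: generate.induct)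
    case one then show ?case by (intro bexI[of _ "[]"]) auto
  next
    case (incl h) then obtain a where a: "a \<in> A" "h = \<pi> a" by auto
    then show ?case by (intro bexI[of _ "[(a,True)]"]) (auto simp: letter_val_def piA)
  next
    case (inv h) then obtain a where a: "a \<in> A" "h = \<pi> a" by auto
    then show ?case by (intro bexI[of _ "[(a,False)]"]) (auto simp: letter_val_def piA)
  next
    case (eng h1 h2)
    then obtain u v where "u \<in> words A" "v \<in> words A" "ev u = h1" "ev v = h2" by auto
    then show ?case by (intro bexI[of _ "u @ v"]) (auto simp: ev_append)
  qed
qed

lemma wl_le: "w \<in> words A \<Longrightarrow> wl (ev w) \<le> length w"
  unfolding wlen_def by (rule Least_le) blast

lemma wl_ex: "x \<in> carrier G \<Longrightarrow> \<exists>w\<in>words A. length w = wl x \<and> ev w = x"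
proof -
  assume "x \<in> carrier G"
  then obtain w where "w \<in> words A" "ev w = x" using all_words by blast
  then have "\<exists>n. \<exists>w\<in>words A. length w = n \<and> ev w = x" by blast
  then show ?thesis unfolding wlen_def by (rule LeastI_ex)
qed

lemma wl_mult: "x \<in> carrier G \<Longrightarrow> y \<in> carrier G \<Longrightarrow> wl (x \<otimes> y) \<le> wl x + wl y"
proof -
  assume "x \<in> carrier G" "y \<in> carrier G"
  then obtain u v where "u \<in> words A" "v \<in> words A" "length u = wl x" "length v = wl y"
    "ev u = x" "ev v = y" using wl_ex by meson
  then show ?thesis using wl_le[of "u @ v"] by (simp add: ev_append)
qed

lemma wl_inv_le: "x \<in> carrier G \<Longrightarrow> wl (inv x) \<le> wl x"
proof -
  assume "x \<in> carrier G"
  then obtain u where "u \<in> words A" "length u = wl x" "ev u = x" using wl_ex by meson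
  then show ?thesis using wl_le[of "iw u"] by (simp add: ev_iw iw_words)
qed

lemma wl_inv: "x \<in> carrier G \<Longrightarrow> wl (inv x) = wl x"
  using wl_inv_le[of x] wl_inv_le[of "inv x"] by simp

lemma wl_one: "wl \<one> = 0"
  using wl_le[of "[]"] by simp

abbreviation "d \<equiv> dX G A \<pi>"

lemma d_sym: "x \<in> carrier G \<Longrightarrow> y \<in> carrier G \<Longrightarrow> d x y = d y x"
  unfolding dX_def by (metis inv_closed inv_mult_group inv_inv m_closed wl_inv)

lemma d_tri: "x \<in> carrier G \<Longrightarrow> y \<in> carrier G \<Longrightarrow> z \<in> carrier G \<Longrightarrow> d x z \<le> d x y + d y z"
proof -
  assume c: "x \<in> carrier G" "y \<in> carrier G" "z \<in> carrier G"
  have "inv x \<otimes> z = (inv x \<otimes> y) \<otimes> (inv y \<otimes> z)" using c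
  proof -
    have "(inv x \<otimes> y) \<otimes> (inv y \<otimes> z) = inv x \<otimes> (y \<otimes> (inv y \<otimes> z))"
      using c by (simp add: m_assoc)
    also have "y \<otimes> (inv y \<otimes> z) = z" using c by (simp add: m_assoc[symmetric])
    finally show ?thesis by simp
  qed
  then show ?thesis unfolding dX_def using c by (simp add: wl_mult)
qed

lemma d_one: "x \<in> carrier G \<Longrightarrow> d \<one> x = wl x"
  unfolding dX_def by simp

lemma d_left: "x \<in> carrier G \<Longrightarrow> y \<in> carrier G \<Longrightarrow> d x (x \<otimes> y) = wl y"
proof -
  assume c: "x \<in> carrier G" "y \<in> carrier G"
  have "inv x \<otimes> (x \<otimes> y) = y" using c by (simp add: m_assoc[symmetric])
  then show ?thesis unfolding dX_def by simp
qed


lemma geo_prefix: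
  assumes w: "w \<in> words A" "length w = wl (ev w)" and k: "k \<le> length w"
  shows "d \<one> (ev (take k w)) = k" "d (ev (take k w)) (ev w) = length w - k"
proof -
  have t: "take k w \<in> words A" "drop k w \<in> words A"
    using w(1) by (metis append_take_drop_id words_append)+
  have e: "ev w = ev (take k w) \<otimes> ev (drop k w)"
    using t ev_append by (metis append_take_drop_id)
  have c: "ev (take k w) \<in> carrier G" "ev (drop k w) \<in> carrier G" using t ev_closed by auto
  have a: "d \<one> (ev (take k w)) \<le> k" using d_one[OF c(1)] wl_le[OF t(1)] k by simp
  have b: "d (ev (take k w)) (ev w) \<le> length w - k"
    using d_left[OF c] wl_le[OF t(2)] e by simp
  have "length w \<le> d \<one> (ev (take k w)) + d (ev (take k w)) (ev w)"
    using d_tri[of \<one> "ev (take k w)" "ev w"] c w d_one ev_closed by simp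
  then show "d \<one> (ev (take k w)) = k" "d (ev (take k w)) (ev w) = length w - k"
    using a b k by linarith+
qed

lemma length_bound:
  assumes H: "subgroup H G" and g: "g \<in> carrier G" and f: "f \<in> carrier G"
    and ng: "near_geodesic_Y G A \<pi> (H #> g) w"
    and eq: "(H #> g) #> ev w = H #> f"
  shows "w \<in> words A" "length w \<le> wl g + wl f + 4"
proof -
  have Hc: "H \<subseteq> carrier G" using H subgroup.subset by blast
  obtain u1 v u2 where w: "w = u1 @ v @ u2" and l: "length u1 \<le> 1" "length u2 \<le> 1"
    and g1: "geodesic_Y G A \<pi> (H #> g) u1"
    and g2: "geodesic_Y G A \<pi> ((H #> g) #> ev u1) v"
    and g3: "geodesic_Y G A \<pi> ((H #> g) #> ev (u1 @ v)) u2"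
    using ng unfolding near_geodesic_Y_def by blast
  have ws: "u1 \<in> words A" "v \<in> words A" "u2 \<in> words A"
    using g1 g2 g3 unfolding geodesic_Y_def by auto
  then show "w \<in> words A" using w by simp
  have lv: "length v = dY G A \<pi> ((H #> g) #> ev u1) (((H #> g) #> ev u1) #> ev v)"
    using g2 unfolding geodesic_Y_def by auto
  obtain wg where wg: "wg \<in> words A" "length wg = wl (inv g)" "ev wg = inv g"
    using wl_ex[of "inv g"] g by auto
  obtain wf where wf: "wf \<in> words A" "length wf = wl f" "ev wf = f"
    using wl_ex[of f] f by auto
  define z where "z = iw u1 @ wg @ wf @ iw u2"
  have zw: "z \<in> words A" using ws wg wf iw_words by (simp add: z_def)
  have c: "ev u1 \<in> carrier G" "ev v \<in> carrier G" "ev u2 \<in> carrier G"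
    using ws ev_closed by auto
  have evz: "ev z = inv (ev u1) \<otimes> (inv g \<otimes> (f \<otimes> inv (ev u2)))"
    unfolding z_def using ws wg wf iw_words
    by (simp add: ev_append ev_iw)
  have evw: "ev w = ev u1 \<otimes> (ev v \<otimes> ev u2)"
    unfolding w using ws by (simp add: ev_append)
  have L: "((H #> g) #> ev u1) #> ev z = H #> (f \<otimes> inv (ev u2))"
  proof -
    have "((H #> g) #> ev u1) #> ev z = H #> (g \<otimes> ev u1 \<otimes> ev z)"
      using Hc g c zw ev_closed by (simp add: coset_mult_assoc)
    also have "g \<otimes> ev u1 \<otimes> ev z = f \<otimes> inv (ev u2)"
      unfolding evz using g f c by (simp add: m_assoc[symmetric])
        (metis inv_closed m_assoc m_closed r_inv r_one f)
    finally show ?thesis .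
  qed
  have R: "((H #> g) #> ev u1) #> ev v = H #> (f \<otimes> inv (ev u2))"
  proof -
    have "((H #> g) #> ev u1) #> ev v = H #> (g \<otimes> ev u1 \<otimes> ev v)"
      using Hc g c by (simp add: coset_mult_assoc)
    also have "\<dots> = (H #> (g \<otimes> ev w)) #> inv (ev u2)"
      using Hc g c by (simp add: coset_mult_assoc evw m_assoc)
    also have "H #> (g \<otimes> ev w) = H #> f"
      using eq Hc g c evw by (simp add: coset_mult_assoc)
    finally show ?thesis using Hc f c by (simp add: coset_mult_assoc)
  qed
  have "length v \<le> length z"
    unfolding lv wlen_def dY_def using zw L R by (intro Least_le) auto
  also have "length z \<le> 1 + wl g + wl f + 1"
    using l wg wf g by (simp add: z_def wl_inv)
  finally show "length w \<le> wl g + wl f + 4" using w l by simp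
qed

lemma geom:
  fixes \<delta> E :: real and i0 :: nat
  assumes H: "subgroup H G" and g: "g \<in> carrier G" and f: "f \<in> carrier G" and h: "h \<in> H"
    and hyp: "\<forall>t\<in>carrier G. \<forall>x\<in>carrier G. \<forall>y\<in>carrier G. \<forall>z\<in>carrier G.
        gromov_prod G A \<pi> t x z \<ge> min (gromov_prod G A \<pi> t x y) (gromov_prod G A \<pi> t y z) - \<delta>"
    and qc: "\<forall>h1\<in>H. \<forall>w\<in>words A.
        h1 \<otimes> ev w \<in> H \<and> length w = d h1 (h1 \<otimes> ev w) \<longrightarrow>
        (\<forall>k\<le>length w. \<exists>h\<in>H. real (d (h1 \<otimes> ev (take k w)) h) \<le> E)"
    and i0: "real i0 > E + 2 * \<delta>" and dpos: "\<delta> \<ge> 0" and Epos: "E > 0"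
    and mg1: "\<forall>x\<in>H #> g. wl g \<le> wl x"
    and mf1: "\<forall>x\<in>H #> f. wl f \<le> wl x"
    and dgq: "d g (h \<otimes> f) \<le> wl g + wl f + 4"
  shows "real (wl h) \<le> 2 * E + 2 * real i0 + 6 * \<delta> + 4"
proof -
  have Hc: "H \<subseteq> carrier G" using H subgroup.subset by blast
  have hc: "h \<in> carrier G" using h Hc by auto
  define q where "q = h \<otimes> f"
  have qc': "q \<in> carrier G" using hc f by (simp add: q_def)
  define n where "n = wl h"
  obtain wh where wh: "wh \<in> words A" "length wh = n" "ev wh = h"
    using wl_ex[OF hc] n_def by auto
  define p where "p i = ev (take i wh)" for i
  have pc: "p i \<in> carrier G" for i
  proof -
    have "take i wh \<in> words A" using wh(1) by (auto simp: words_def dest: in_set_takeD)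
    then show ?thesis by (simp add: p_def ev_closed)
  qed
  have p1: "d \<one> (p i) = i" "d (p i) h = n - i" if "i \<le> n" for i
    using geo_prefix[of wh i] wh that n_def unfolding p_def by auto
  have near: "\<exists>k\<in>H. real (d (p i) k) \<le> E" if "i \<le> n" for i
  proof -
    have "\<one> \<otimes> ev wh \<in> H \<and> length wh = d \<one> (\<one> \<otimes> ev wh)"
      using wh hc h d_one n_def by simp
    then have "\<exists>k\<in>H. real (d (\<one> \<otimes> ev (take i wh)) k) \<le> E"
    proof -
      have "\<one> \<in> H" using H subgroup.one_closed by blast
      then have "\<forall>k\<le>length wh. \<exists>h\<in>H. real (d (\<one> \<otimes> ev (take k wh)) h) \<le> E"
        using qc wh(1) \<open>\<one> \<otimes> ev wh \<in> H \<and> length wh = d \<one> (\<one> \<otimes> ev wh)\<close> by blast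
      then show ?thesis using that wh(2) by blast
    qed
    then show ?thesis using pc[of i] unfolding p_def by simp
  qed
  have farg: "real (d (p i) g) \<ge> real (wl g) - E" if il: "i \<le> n" for i
  proof -
    obtain k where k: "k \<in> H" "real (d (p i) k) \<le> E" using near[OF il] by blast
    have kc: "k \<in> carrier G" using k Hc by auto
    have "inv k \<in> H" using k H by (simp add: subgroup.m_inv_closed)
    then have "inv k \<otimes> g \<in> H #> g" using rcosI Hc g by blast
    then have "wl g \<le> wl (inv k \<otimes> g)" by (rule bspec[OF mg1])
    then have "wl g \<le> d k g" unfolding dX_def .
    moreover have "d k g \<le> d k (p i) + d (p i) g" using d_tri[OF kc pc g] .
    moreover have "d k (p i) = d (p i) k" using d_sym[OF kc pc[of i]] .
    ultimately show ?thesis using k(2) by linarith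
  qed
  have farq: "real (d (p i) q) \<ge> real (wl f) - E" if il: "i \<le> n" for i
  proof -
    obtain k where k: "k \<in> H" "real (d (p i) k) \<le> E" using near[OF il] by blast
    have kc: "k \<in> carrier G" using k Hc by auto
    have "inv k \<otimes> h \<in> H" using k h H by (simp add: subgroup.m_closed subgroup.m_inv_closed)
    then have "(inv k \<otimes> h) \<otimes> f \<in> H #> f" using rcosI Hc f by blast
    moreover have "(inv k \<otimes> h) \<otimes> f = inv k \<otimes> q" using kc hc f by (simp add: q_def m_assoc)
    ultimately have "inv k \<otimes> q \<in> H #> f" by simp
    then have "wl f \<le> wl (inv k \<otimes> q)" by (rule bspec[OF mf1])
    then have "wl f \<le> d k q" unfolding dX_def .
    moreover have "d k q \<le> d k (p i) + d (p i) q" using d_tri[OF kc pc qc'] .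
    moreover have "d k (p i) = d (p i) k" using d_sym[OF kc pc[of i]] .
    ultimately show ?thesis using k(2) by linarith
  qed
  have dhq: "d h q = wl f" using d_left hc f q_def by simp
  have d1g: "d \<one> g = wl g" using d_one g by simp
  have d1h: "d \<one> h = n" using d_one hc n_def by simp
  have gp: "gromov_prod G A \<pi> t x y = real (d x t) / 2 + real (d y t) / 2 - real (d x y) / 2" for t x y
    unfolding gromov_prod_def by (simp add: diff_divide_distrib add_divide_distrib)
  show ?thesis
  proof (cases "i0 \<le> n")
    case False
    then have "real n < real i0" by simp
    then show ?thesis using i0 dpos Epos n_def by linarith
  next
    case True
    let ?p = "p i0"
    have A4: "gromov_prod G A \<pi> ?p \<one> h \<ge> min (gromov_prod G A \<pi> ?p \<one> g) (gromov_prod G A \<pi> ?p g h) - \<delta>"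
      using hyp pc g hc by blast
    have e1: "d \<one> ?p = i0" "d ?p h = n - i0" using p1 True by auto
    have e2: "d ?p \<one> = i0" "d h ?p = n - i0" using e1 d_sym pc hc by (metis one_closed)+
    have e3: "d g ?p \<ge> real (wl g) - E" using farg[OF True] d_sym pc g by metis
    have e4: "d \<one> h = n" "d \<one> g = wl g" using d1h d1g by auto
    have A: "real (d g h) \<ge> real (wl g) - E + real n - real i0 - 2 * \<delta>"
    proof -
      have r: "real (d \<one> ?p) = real i0" "real (d h ?p) = real n - real i0" "real (d \<one> h) = real n"
        "real (d \<one> g) = real (wl g)" "real (d g ?p) \<ge> real (wl g) - E"
        using e1 e2 e3 e4 True by (auto simp: of_nat_diff)
      have "gromov_prod G A \<pi> ?p \<one> g - \<delta> \<le> gromov_prod G A \<pi> ?p \<one> h \<or>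
            gromov_prod G A \<pi> ?p g h - \<delta> \<le> gromov_prod G A \<pi> ?p \<one> h"
        using A4 by (simp add: min_def split: if_splits)
      then show ?thesis
      proof (elim disjE)
        assume "gromov_prod G A \<pi> ?p \<one> g - \<delta> \<le> gromov_prod G A \<pi> ?p \<one> h"
        then show ?thesis using r i0 unfolding gp by linarith
      next
        assume "gromov_prod G A \<pi> ?p g h - \<delta> \<le> gromov_prod G A \<pi> ?p \<one> h"
        then show ?thesis using r i0 unfolding gp by linarith
      qed
    qed
    let ?r = "p (n - i0)"
    have B4: "gromov_prod G A \<pi> ?r h \<one> \<ge> min (gromov_prod G A \<pi> ?r h q) (gromov_prod G A \<pi> ?r q \<one>) - \<delta>"
      using hyp pc qc' hc by blast
    have b1: "d \<one> ?r = n - i0" "d ?r h = i0" using p1[of "n - i0"] True by auto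
    have b2: "d h ?r = i0" using b1 d_sym pc hc by metis
    have b3: "d q ?r \<ge> real (wl f) - E" using farq[of "n - i0"] d_sym pc qc' by (metis diff_le_self)
    have b4: "d h \<one> = n" "d h q = wl f" using d1h dhq d_sym hc by auto
    have B: "real (d q \<one>) \<ge> real (wl f) - E + real n - real i0 - 2 * \<delta>"
    proof -
      have r: "real (d h ?r) = real i0" "real (d \<one> ?r) = real n - real i0" "real (d h \<one>) = real n"
        "real (d h q) = real (wl f)" "real (d q ?r) \<ge> real (wl f) - E"
        using b1 b2 b3 b4 True by (auto simp: of_nat_diff)
      have "gromov_prod G A \<pi> ?r h q - \<delta> \<le> gromov_prod G A \<pi> ?r h \<one> \<or>
            gromov_prod G A \<pi> ?r q \<one> - \<delta> \<le> gromov_prod G A \<pi> ?r h \<one>"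
        using B4 by (simp add: min_def split: if_splits)
      then show ?thesis
      proof (elim disjE)
        assume "gromov_prod G A \<pi> ?r h q - \<delta> \<le> gromov_prod G A \<pi> ?r h \<one>"
        then show ?thesis using r i0 unfolding gp by linarith
      next
        assume "gromov_prod G A \<pi> ?r q \<one> - \<delta> \<le> gromov_prod G A \<pi> ?r h \<one>"
        then show ?thesis using r i0 unfolding gp by linarith
      qed
    qed
    have C4: "gromov_prod G A \<pi> \<one> g h \<ge> min (gromov_prod G A \<pi> \<one> g q) (gromov_prod G A \<pi> \<one> q h) - \<delta>"
      using hyp g qc' hc by blast
    have c1: "d g \<one> = wl g" "d h \<one> = n" "d q h = wl f" "d g q \<le> wl g + wl f + 4"
    proof -
      show "d g \<one> = wl g" using d1g d_sym[OF g one_closed] by simp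
      show "d h \<one> = n" using d1h d_sym[OF hc one_closed] by simp
      show "d q h = wl f" using dhq d_sym[OF qc' hc] by simp
      show "d g q \<le> wl g + wl f + 4" using dgq q_def by simp
    qed
    have c2: "real (d g q) \<le> real (wl g) + real (wl f) + 4" using c1(4) by linarith
    have C5: "gromov_prod G A \<pi> \<one> g q - \<delta> \<le> gromov_prod G A \<pi> \<one> g h \<or>
              gromov_prod G A \<pi> \<one> q h - \<delta> \<le> gromov_prod G A \<pi> \<one> g h"
      using C4 by (simp add: min_def split: if_splits)
    have r: "real (d g \<one>) = real (wl g)" "real (d h \<one>) = real n" "real (d q h) = real (wl f)"
      using c1 by auto
    show ?thesis
    proof -
      have nn: "real n = real (wl h)" using n_def by simp
      from C5 show ?thesis
      proof (elim disjE)
        assume "gromov_prod G A \<pi> \<one> g q - \<delta> \<le> gromov_prod G A \<pi> \<one> g h"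
        then show ?thesis using A B r c2 nn i0 dpos Epos unfolding gp by linarith
      next
        assume "gromov_prod G A \<pi> \<one> q h - \<delta> \<le> gromov_prod G A \<pi> \<one> g h"
        then show ?thesis using A B r c2 nn i0 dpos Epos unfolding gp by linarith
      qed
    qed
  qed
qed
end

theorem lemma3p3:
  fixes G :: "('g, 'b) monoid_scheme" and A :: "'a set" and \<pi> :: "'a \<Rightarrow> 'g" and H :: "'g set"
  assumes "group G"
    and "marked_gen_set G A \<pi>"
    and "word_hyperbolic G A \<pi>"
    and "subgroup H G"
    and "quasiconvex G A \<pi> H"
  shows "\<exists>K1::nat. K1 > 0 \<and>
    (\<forall>g\<in>carrier G. \<forall>f\<in>carrier G. \<forall>w. \<forall>h\<in>H.
       (\<forall>x\<in>H #>\<^bsub>G\<^esub> g. wlen G A \<pi> g \<le> wlen G A \<pi> x) \<longrightarrow>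
       (\<forall>x\<in>H #>\<^bsub>G\<^esub> f. wlen G A \<pi> f \<le> wlen G A \<pi> x) \<longrightarrow>
       near_geodesic_Y G A \<pi> (H #>\<^bsub>G\<^esub> g) w \<longrightarrow>
       (H #>\<^bsub>G\<^esub> g) #>\<^bsub>G\<^esub> word_eval G \<pi> w = H #>\<^bsub>G\<^esub> f \<longrightarrow>
       h \<otimes>\<^bsub>G\<^esub> f = g \<otimes>\<^bsub>G\<^esub> word_eval G \<pi> w \<longrightarrow>
       wlen G A \<pi> h \<le> K1)"
proof -
  have ws: "wsetup G A \<pi>"
    using assms(1,2) by (simp add: wsetup_def wsetup_axioms_def)
  obtain \<delta> :: real where dpos: "\<delta> \<ge> 0" and hyp: "\<forall>t\<in>carrier G. \<forall>x\<in>carrier G. \<forall>y\<in>carrier G. \<forall>z\<in>carrier G.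
        gromov_prod G A \<pi> t x z \<ge> min (gromov_prod G A \<pi> t x y) (gromov_prod G A \<pi> t y z) - \<delta>"
    using assms(3) unfolding word_hyperbolic_def by blast
  obtain E :: real where Epos: "E > 0" and qc: "\<forall>h1\<in>H. \<forall>w\<in>words A.
        h1 \<otimes>\<^bsub>G\<^esub> word_eval G \<pi> w \<in> H \<and>
        length w = dX G A \<pi> h1 (h1 \<otimes>\<^bsub>G\<^esub> word_eval G \<pi> w) \<longrightarrow>
        (\<forall>k\<le>length w. \<exists>h\<in>H. real (dX G A \<pi> (h1 \<otimes>\<^bsub>G\<^esub> word_eval G \<pi> (take k w)) h) \<le> E)"
    using assms(5) unfolding quasiconvex_def by blast
  define i0 where "i0 = nat (ceiling (E + 2 * \<delta>)) + 1"
  have i0: "real i0 > E + 2 * \<delta>"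
  proof -
    have "E + 2 * \<delta> \<le> real (nat (ceiling (E + 2 * \<delta>)))" by linarith
    then show ?thesis unfolding i0_def by simp
  qed
  define Bnd where "Bnd = 2 * E + 2 * real i0 + 6 * \<delta> + 4"
  define K where "K = nat (ceiling Bnd) + 1"
  have BK: "Bnd < real K" unfolding K_def by linarith
  show ?thesis
  proof (intro exI[of _ K] conjI ballI allI impI)
    show "0 < K" unfolding K_def by simp
  next
    fix g f w h
    assume g: "g \<in> carrier G" and f: "f \<in> carrier G" and h: "h \<in> H"
      and mg1: "\<forall>x\<in>H #>\<^bsub>G\<^esub> g. wlen G A \<pi> g \<le> wlen G A \<pi> x"
      and mf1: "\<forall>x\<in>H #>\<^bsub>G\<^esub> f. wlen G A \<pi> f \<le> wlen G A \<pi> x"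
      and ng: "near_geodesic_Y G A \<pi> (H #>\<^bsub>G\<^esub> g) w"
      and eq: "(H #>\<^bsub>G\<^esub> g) #>\<^bsub>G\<^esub> word_eval G \<pi> w = H #>\<^bsub>G\<^esub> f"
      and hf: "h \<otimes>\<^bsub>G\<^esub> f = g \<otimes>\<^bsub>G\<^esub> word_eval G \<pi> w"
    have lb: "w \<in> words A" "length w \<le> wlen G A \<pi> g + wlen G A \<pi> f + 4"
      using wsetup.length_bound[OF ws assms(4) g f ng eq] by auto
    have "dX G A \<pi> g (h \<otimes>\<^bsub>G\<^esub> f) = wlen G A \<pi> (word_eval G \<pi> w)"
      unfolding hf using wsetup.d_left[OF ws g wsetup.ev_closed[OF ws lb(1)]] .
    also have "\<dots> \<le> length w" using wsetup.wl_le[OF ws lb(1)] .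
    finally have dgq: "dX G A \<pi> g (h \<otimes>\<^bsub>G\<^esub> f) \<le> wlen G A \<pi> g + wlen G A \<pi> f + 4"
      using lb(2) by linarith
    have "real (wlen G A \<pi> h) \<le> Bnd"
      unfolding Bnd_def
      by (rule wsetup.geom[OF ws assms(4) g f h hyp qc i0 dpos Epos mg1 mf1 dgq])
    then show "wlen G A \<pi> h \<le> K" using BK by linarith
  qed
qed

end
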